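(* Let $(X,d^\star)$ be a complete $\star$-metric space and $M\subseteq X$ nonempty. Then the subspace $(M,d^\star|_{M\times M})$ is complete if and only if $M$ is closed in $X$.
   Context: A $t$-definer is a function $\star:[0,\infty)\times[0,\infty)\to[0,\infty)$ such that for all $a,b,c\ge 0$: $a\star b=b\star a$; $a\star(b\star c)=(a\star b)\star c$; if $a\le b$ then $a\star c\le b\star c$; $a\star 0=a$; and $\star$ is continuous in its first variable with respect to the Euclidean topology. Given a nonempty set $X$ and a $t$-definer $\star$, a $\star$-metric on $X$ is a function $d^\star:X\times X\to[0,\infty)$ such that for all $x,y,z\in X$: $d^\star(x,y)=0$ iff $x=y$; $d^\star(x,y)=d^\star(y,x)$; and $d^\star(x,y)\le d^\star(x,z)\star d^\star(z,y)$. Closedness refers to the topology consisting of all $U\subseteq X$ such that for each $a\in U$ there is $r>0$ with $\{x: d^\star(a,x)<r\}\subseteq U$. A sequence $\{x_n\}$ is Cauchy if for every $\epsilon>0$ there is $k$ with $d^\star(x_n,x_m)<\epsilon$ for all $m,n\ge k$; it converges to $x$ if for every $\epsilon>0$ there is $k$ with $d^\star(x,x_n)<\epsilon$ for $n\ge k$. A $\star$-metric space is complete if every Cauchy sequence in it converges to a point of the space. *)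

theory Defs
  imports "HOL-Analysis.Analysis"
begin

text \<open>A t-definer: a binary operation on [0,\<infinity>) (represented on real, relativised to nonnegatives).\<close>
definition t_definer :: "(real \<Rightarrow> real \<Rightarrow> real) \<Rightarrow> bool" where
  "t_definer st \<longleftrightarrow>
     (\<forall>a\<ge>0. \<forall>b\<ge>0. st a b \<ge> 0) \<and>
     (\<forall>a\<ge>0. \<forall>b\<ge>0. st a b = st b a) \<and>
     (\<forall>a\<ge>0. \<forall>b\<ge>0. \<forall>c\<ge>0. st a (st b c) = st (st a b) c) \<and>
     (\<forall>a\<ge>0. \<forall>b\<ge>0. \<forall>c\<ge>0. a \<le> b \<longrightarrow> st a c \<le> st b c) \<and>
     (\<forall>a\<ge>0. st a 0 = a) \<and>
     (\<forall>b\<ge>0. continuous_on {0..} (\<lambda>a. st a b))"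

definition star_metric :: "'a set \<Rightarrow> (real \<Rightarrow> real \<Rightarrow> real) \<Rightarrow> ('a \<Rightarrow> 'a \<Rightarrow> real) \<Rightarrow> bool" where
  "star_metric X st d \<longleftrightarrow>
     (\<forall>x\<in>X. \<forall>y\<in>X. d x y \<ge> 0) \<and>
     (\<forall>x\<in>X. \<forall>y\<in>X. d x y = 0 \<longleftrightarrow> x = y) \<and>
     (\<forall>x\<in>X. \<forall>y\<in>X. d x y = d y x) \<and>
     (\<forall>x\<in>X. \<forall>y\<in>X. \<forall>z\<in>X. d x y \<le> st (d x z) (d z y))"

definition star_open :: "'a set \<Rightarrow> ('a \<Rightarrow> 'a \<Rightarrow> real) \<Rightarrow> 'a set \<Rightarrow> bool" where
  "star_open X d U \<longleftrightarrow> U \<subseteq> X \<and> (\<forall>a\<in>U. \<exists>r>0. {x\<in>X. d a x < r} \<subseteq> U)"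

definition star_closed :: "'a set \<Rightarrow> ('a \<Rightarrow> 'a \<Rightarrow> real) \<Rightarrow> 'a set \<Rightarrow> bool" where
  "star_closed X d M \<longleftrightarrow> M \<subseteq> X \<and> star_open X d (X - M)"

definition star_cauchy :: "'a set \<Rightarrow> ('a \<Rightarrow> 'a \<Rightarrow> real) \<Rightarrow> (nat \<Rightarrow> 'a) \<Rightarrow> bool" where
  "star_cauchy S d x \<longleftrightarrow> (\<forall>n. x n \<in> S) \<and>
     (\<forall>\<epsilon>>0. \<exists>k. \<forall>m\<ge>k. \<forall>n\<ge>k. d (x n) (x m) < \<epsilon>)"

definition star_converges :: "('a \<Rightarrow> 'a \<Rightarrow> real) \<Rightarrow> (nat \<Rightarrow> 'a) \<Rightarrow> 'a \<Rightarrow> bool" where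
  "star_converges d x l \<longleftrightarrow> (\<forall>\<epsilon>>0. \<exists>k. \<forall>n\<ge>k. d l (x n) < \<epsilon>)"

definition star_complete :: "'a set \<Rightarrow> ('a \<Rightarrow> 'a \<Rightarrow> real) \<Rightarrow> bool" where
  "star_complete S d \<longleftrightarrow> (\<forall>x. star_cauchy S d x \<longrightarrow> (\<exists>l\<in>S. star_converges d x l))"

end

theory Submission
  imports Defs
begin

lemma st_small:
  assumes T: "t_definer st" and e: "(e::real) > 0"
  shows "\<exists>\<delta>>0. \<forall>a b. 0 \<le> a \<longrightarrow> 0 \<le> b \<longrightarrow> a < \<delta> \<longrightarrow> b < \<delta> \<longrightarrow> st a b < e"
proof -
  have comm: "\<And>a b. a\<ge>0 \<Longrightarrow> b\<ge>0 \<Longrightarrow> st a b = st b a"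
    and mono: "\<And>a b c. a\<ge>0 \<Longrightarrow> b\<ge>0 \<Longrightarrow> c\<ge>0 \<Longrightarrow> a \<le> b \<Longrightarrow> st a c \<le> st b c"
    and zero: "\<And>a. a\<ge>0 \<Longrightarrow> st a 0 = a"
    and cont: "\<And>b. b\<ge>0 \<Longrightarrow> continuous_on {0..} (\<lambda>a. st a b)"
    using T unfolding t_definer_def by auto
  have h: "e/2 \<ge> 0" using e by simp
  from cont[OF h] have "\<forall>x\<in>{0..}. \<forall>\<epsilon>>0. \<exists>\<delta>>0. \<forall>x'\<in>{0..}. dist x' x < \<delta> \<longrightarrow> dist (st x' (e/2)) (st x (e/2)) < \<epsilon>"
    unfolding continuous_on_iff by blast
  hence "\<exists>d>0. \<forall>x'\<in>{0..}. dist x' 0 < d \<longrightarrow> dist (st x' (e/2)) (st 0 (e/2)) < e/2"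
    using e by (meson atLeast_iff half_gt_zero order_refl)
  then obtain d where d: "d > 0" and dd: "\<And>x'. x' \<ge> 0 \<Longrightarrow> x' < d \<Longrightarrow> dist (st x' (e/2)) (st 0 (e/2)) < e/2"
    by (auto simp: dist_real_def)
  have s0: "st 0 (e/2) = e/2" using comm[of 0 "e/2"] zero[OF h] h by simp
  show ?thesis
  proof (intro exI[of _ "min d (e/2)"] conjI allI impI)
    show "min d (e/2) > 0" using d e by simp
    fix a b :: real assume a: "0 \<le> a" and b: "0 \<le> b" and al: "a < min d (e/2)" and bl: "b < min d (e/2)"
    define m where "m = max a b"
    have m0: "m \<ge> 0" using a m_def by simp
    have "st a b \<le> st m b" using mono[OF a m0 b] m_def by simp
    also have "\<dots> = st b m" using comm m0 b by simp
    also have "\<dots> \<le> st (e/2) m" using mono[OF b h m0] bl by simp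
    also have "\<dots> = st m (e/2)" using comm m0 h by simp
    also have "\<dots> < e"
    proof -
      have "m < d" using al bl m_def by simp
      hence "\<bar>st m (e/2) - e/2\<bar> < e/2" using dd[OF m0] s0 by (simp add: dist_real_def)
      thus ?thesis by linarith
    qed
    finally show "st a b < e" .
  qed
qed

theorem theorem4p11:
  fixes X M :: "'a set" and st :: "real \<Rightarrow> real \<Rightarrow> real" and d :: "'a \<Rightarrow> 'a \<Rightarrow> real"
  assumes "t_definer st"
    and "star_metric X st d"
    and "star_complete X d"
    and "M \<subseteq> X" and "M \<noteq> {}"
  shows "star_complete M (\<lambda>x y. if x \<in> M \<and> y \<in> M then d x y else 0) \<longleftrightarrow> star_closed X d M"
proof -
  note T = assms(1)
  have pos: "\<And>x y. x\<in>X \<Longrightarrow> y\<in>X \<Longrightarrow> d x y \<ge> 0"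
    and eq0: "\<And>x y. x\<in>X \<Longrightarrow> y\<in>X \<Longrightarrow> d x y = 0 \<longleftrightarrow> x = y"
    and sym: "\<And>x y. x\<in>X \<Longrightarrow> y\<in>X \<Longrightarrow> d x y = d y x"
    and tri: "\<And>x y z. x\<in>X \<Longrightarrow> y\<in>X \<Longrightarrow> z\<in>X \<Longrightarrow> d x y \<le> st (d x z) (d z y)"
    using assms(2) unfolding star_metric_def by auto
  let ?d = "\<lambda>x y. if x \<in> M \<and> y \<in> M then d x y else 0"
  show ?thesis
  proof
    assume C: "star_complete M ?d"
    show "star_closed X d M"
      unfolding star_closed_def star_open_def
    proof (intro conjI ballI)
      show "M \<subseteq> X" by fact
      show "X - M \<subseteq> X" by auto
      fix a assume aXM: "a \<in> X - M"
      hence aX: "a \<in> X" and aM: "a \<notin> M" by auto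
      show "\<exists>r>0. {x \<in> X. d a x < r} \<subseteq> X - M"
      proof (rule ccontr)
        assume "\<not> ?thesis"
        hence "\<forall>n::nat. \<exists>x. x \<in> M \<and> d a x < 1 / (real n + 1)"
          by (metis (mono_tags, lifting) Diff_iff divide_pos_pos mem_Collect_eq of_nat_add
              of_nat_0_less_iff zero_less_Suc of_nat_1 Suc_eq_plus1 subsetI zero_less_one)
        then obtain x where xM: "\<And>n. x n \<in> M" and xd: "\<And>n. d a (x n) < 1 / (real n + 1)"
          by metis
        have xX: "\<And>n. x n \<in> X" using xM assms(4) by auto
        have small: "\<exists>k. \<forall>n\<ge>k. d a (x n) < \<delta>" if "\<delta> > 0" for \<delta>
        proof -
          obtain k :: nat where k: "1 / \<delta> < real k" using reals_Archimedean2 by blast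
          have "d a (x n) < \<delta>" if "n \<ge> k" for n
          proof -
            have "1/\<delta> < real n + 1" using k that by linarith
            hence "1 / (real n + 1) < \<delta>" using \<open>\<delta>>0\<close>
              by (metis divide_less_eq mult.commute of_nat_0_le_iff add_nonneg_pos zero_less_one
                  less_divide_eq)
            thus ?thesis using xd[of n] by linarith
          qed
          thus ?thesis by blast
        qed
        have "star_cauchy M ?d x"
          unfolding star_cauchy_def
        proof (intro conjI allI impI)
          show "\<And>n. x n \<in> M" by fact
          fix e :: real assume e: "e > 0"
          obtain \<delta> where \<delta>: "\<delta> > 0" and sd: "\<And>a b. 0 \<le> a \<Longrightarrow> 0 \<le> b \<Longrightarrow> a < \<delta> \<Longrightarrow> b < \<delta> \<Longrightarrow> st a b < e"
            using st_small[OF T e] by blast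
          obtain k where k: "\<And>n. n\<ge>k \<Longrightarrow> d a (x n) < \<delta>" using small[OF \<delta>] by blast
          have "\<forall>m\<ge>k. \<forall>n\<ge>k. ?d (x n) (x m) < e"
          proof (intro allI impI)
            fix m n assume m: "m \<ge> k" and n: "n \<ge> k"
            have "d (x n) (x m) \<le> st (d (x n) a) (d a (x m))" using tri xX aX by blast
            also have "\<dots> < e" using sd[of "d (x n) a" "d a (x m)"] k[OF m] k[OF n] sym[OF aX xX[of n]]
                pos aX xX by auto
            finally show "?d (x n) (x m) < e" using xM by simp
          qed
          thus "\<exists>k. \<forall>m\<ge>k. \<forall>n\<ge>k. ?d (x n) (x m) < e" by blast
        qed
        then obtain l where lM: "l \<in> M" and conv: "star_converges ?d x l"
          using C unfolding star_complete_def by blast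
        have lX: "l \<in> X" using lM assms(4) by auto
        have "d a l < e" if e: "e > 0" for e
        proof -
          obtain \<delta> where \<delta>: "\<delta> > 0" and sd: "\<And>a b. 0 \<le> a \<Longrightarrow> 0 \<le> b \<Longrightarrow> a < \<delta> \<Longrightarrow> b < \<delta> \<Longrightarrow> st a b < e"
            using st_small[OF T e] by blast
          obtain k1 where k1: "\<And>n. n\<ge>k1 \<Longrightarrow> d a (x n) < \<delta>" using small[OF \<delta>] by blast
          obtain k2 where k2: "\<And>n. n\<ge>k2 \<Longrightarrow> ?d l (x n) < \<delta>" using conv \<delta> unfolding star_converges_def by blast
          define n where "n = max k1 k2"
          have "d a l \<le> st (d a (x n)) (d (x n) l)" using tri aX lX xX by blast
          also have "\<dots> < e" using sd[of "d a (x n)" "d (x n) l"] k1[of n] k2[of n] sym[OF lX xX[of n]]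
              pos aX xX lX xM lM unfolding n_def by auto
          finally show ?thesis .
        qed
        hence "d a l \<le> 0" by (metis less_irrefl not_le)
        hence "d a l = 0" using pos[OF aX lX] by linarith
        hence "a = l" using eq0 aX lX by blast
        thus False using aM lM by simp
      qed
    qed
  next
    assume Cl: "star_closed X d M"
    show "star_complete M ?d"
      unfolding star_complete_def
    proof (intro allI impI)
      fix x assume cx: "star_cauchy M ?d x"
      hence xM: "\<And>n. x n \<in> M" unfolding star_cauchy_def by blast
      have "star_cauchy X d x" using cx xM assms(4) unfolding star_cauchy_def by auto
      then obtain l where lX: "l \<in> X" and conv: "star_converges d x l"
        using assms(3) unfolding star_complete_def by blast
      have lM: "l \<in> M"
      proof (rule ccontr)
        assume "l \<notin> M"
        then obtain r where r: "r > 0" and sub: "{y \<in> X. d l y < r} \<subseteq> X - M"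
          using Cl lX unfolding star_closed_def star_open_def by blast
        obtain k where "\<forall>n\<ge>k. d l (x n) < r" using conv r unfolding star_converges_def by blast
        hence "x k \<in> X - M" using sub xM assms(4) by auto
        thus False using xM by auto
      qed
      have "star_converges ?d x l" using conv xM lM unfolding star_converges_def by simp
      thus "\<exists>l\<in>M. star_converges ?d x l" using lM by blast
    qed
  qed
qed

end
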